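(* The class of locally strongly sober spaces is projective, and so is the class of strongly sober spaces. That is: if $(p_{ij}\colon X_j\to X_i)_{i\sqsubseteq j\in I}$ is a projective system of topological spaces in which every $X_i$ is locally strongly sober (resp. strongly sober), then every projective limit of this system, taken in the category of topological spaces and continuous maps, is locally strongly sober (resp. strongly sober).
   Context: A projective system of topological spaces consists of a directed preordered set $(I,\sqsubseteq)$ (non-empty, any two elements have an upper bound), topological spaces $X_i$ ($i\in I$) and continuous maps $p_{ij}\colon X_j\to X_i$ for $i\sqsubseteq j$ with $p_{ii}=\mathrm{id}$ and $p_{ij}\circ p_{jk}=p_{ik}$. Its projective limit is its categorical limit in the category of topological spaces; canonically it is the subspace $\{\vec x\in\prod_{i\in I}X_i \mid p_{ij}(x_j)=x_i \text{ for all } i\sqsubseteq j\}$ of the product, with the coordinate projections. A class of spaces is projective if projective limits of projective systems of spaces in the class are in the class. The specialization preorder of a space is $x\le y$ iff every open neighbourhood of $x$ contains $y$; $\downarrow x$ denotes the set of points below $x$ (the closure of $\{x\}$). A space $X$ is locally strongly sober if for every convergent ultrafilter $\mathcal U$ on $X$, the set $\lim\mathcal U$ of its limits equals $\downarrow x$ for a unique point $x$; it is strongly sober if this holds for every ultrafilter $\mathcal U$ on $X$ (equivalently, $X$ is locally strongly sober and compact). Compactness assumes no separation axiom. *)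

theory Defs
  imports "HOL-Analysis.Analysis"
begin

text \<open>An ultrafilter on the set S, represented as a filter on the ambient type
  that contains S: proper, contains S, and for every subset either it or its
  complement belongs to the filter.\<close>
definition ultrafilter_on :: "'a set \<Rightarrow> 'a filter \<Rightarrow> bool" where
  "ultrafilter_on S F \<longleftrightarrow> F \<noteq> bot \<and> eventually (\<lambda>x. x \<in> S) F \<and>
     (\<forall>P. eventually P F \<or> eventually (\<lambda>x. \<not> P x) F)"

definition lims :: "'a topology \<Rightarrow> 'a filter \<Rightarrow> 'a set" where
  "lims X F = {x. limitin X id x F}"

definition spec_le :: "'a topology \<Rightarrow> 'a \<Rightarrow> 'a \<Rightarrow> bool" where
  "spec_le X x y \<longleftrightarrow> x \<in> topspace X \<and> y \<in> topspace X \<and>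
     (\<forall>U. openin X U \<and> x \<in> U \<longrightarrow> y \<in> U)"

definition down :: "'a topology \<Rightarrow> 'a \<Rightarrow> 'a set" where
  "down X x = {y. spec_le X y x}"

definition locally_strongly_sober :: "'a topology \<Rightarrow> bool" where
  "locally_strongly_sober X \<longleftrightarrow>
     (\<forall>U. ultrafilter_on (topspace X) U \<and> lims X U \<noteq> {} \<longrightarrow>
        (\<exists>!x. x \<in> topspace X \<and> lims X U = down X x))"

definition strongly_sober :: "'a topology \<Rightarrow> bool" where
  "strongly_sober X \<longleftrightarrow>
     (\<forall>U. ultrafilter_on (topspace X) U \<longrightarrow>
        (\<exists>!x. x \<in> topspace X \<and> lims X U = down X x))"

definition projective_system ::
  "'i set \<Rightarrow> ('i \<Rightarrow> 'i \<Rightarrow> bool) \<Rightarrow> ('i \<Rightarrow> 'a topology) \<Rightarrow> ('i \<Rightarrow> 'i \<Rightarrow> 'a \<Rightarrow> 'a) \<Rightarrow> bool" where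
  "projective_system I le X p \<longleftrightarrow>
     I \<noteq> {} \<and>
     (\<forall>i\<in>I. le i i) \<and>
     (\<forall>i\<in>I. \<forall>j\<in>I. \<forall>k\<in>I. le i j \<and> le j k \<longrightarrow> le i k) \<and>
     (\<forall>i\<in>I. \<forall>j\<in>I. \<exists>k\<in>I. le i k \<and> le j k) \<and>
     (\<forall>i\<in>I. \<forall>j\<in>I. le i j \<longrightarrow> continuous_map (X j) (X i) (p i j)) \<and>
     (\<forall>i\<in>I. \<forall>x\<in>topspace (X i). p i i x = x) \<and>
     (\<forall>i\<in>I. \<forall>j\<in>I. \<forall>k\<in>I. le i j \<and> le j k \<longrightarrow>
        (\<forall>x\<in>topspace (X k). p i j (p j k x) = p i k x))"

definition proj_cone ::
  "'i set \<Rightarrow> ('i \<Rightarrow> 'i \<Rightarrow> bool) \<Rightarrow> ('i \<Rightarrow> 'a topology) \<Rightarrow> ('i \<Rightarrow> 'i \<Rightarrow> 'a \<Rightarrow> 'a)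
    \<Rightarrow> 'b topology \<Rightarrow> ('i \<Rightarrow> 'b \<Rightarrow> 'a) \<Rightarrow> bool" where
  "proj_cone I le X p Z f \<longleftrightarrow>
     (\<forall>i\<in>I. continuous_map Z (X i) (f i)) \<and>
     (\<forall>i\<in>I. \<forall>j\<in>I. le i j \<longrightarrow> (\<forall>z\<in>topspace Z. p i j (f j z) = f i z))"

text \<open>Test cones range over spaces on the carrier type of L, which suffices to characterise
  the limit up to homeomorphism (one-point spaces and the initial topology).\<close>
definition projective_limit ::
  "'i set \<Rightarrow> ('i \<Rightarrow> 'i \<Rightarrow> bool) \<Rightarrow> ('i \<Rightarrow> 'a topology) \<Rightarrow> ('i \<Rightarrow> 'i \<Rightarrow> 'a \<Rightarrow> 'a)
    \<Rightarrow> 'b topology \<Rightarrow> ('i \<Rightarrow> 'b \<Rightarrow> 'a) \<Rightarrow> bool" where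
  "projective_limit I le X p L q \<longleftrightarrow>
     proj_cone I le X p L q \<and>
     (\<forall>(Z::'b topology) f. proj_cone I le X p Z f \<longrightarrow>
        (\<exists>u. continuous_map Z L u \<and> (\<forall>i\<in>I. \<forall>z\<in>topspace Z. q i (u z) = f i z) \<and>
             (\<forall>v. continuous_map Z L v \<and> (\<forall>i\<in>I. \<forall>z\<in>topspace Z. q i (v z) = f i z)
                  \<longrightarrow> (\<forall>z\<in>topspace Z. v z = u z))))"

end

theory Submission
  imports Defs
begin


lemma spec_le_refl: "x \<in> topspace X \<Longrightarrow> spec_le X x x"
  by (simp add: spec_le_def)

lemma spec_le_trans: "spec_le X x y \<Longrightarrow> spec_le X y z \<Longrightarrow> spec_le X x z"
  by (simp add: spec_le_def)

lemma spec_le_open: "spec_le X x y \<Longrightarrow> openin X V \<Longrightarrow> x \<in> V \<Longrightarrow> y \<in> V"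
  by (simp add: spec_le_def)

lemma spec_le_mono:
  assumes "continuous_map X Y f" "spec_le X x y"
  shows "spec_le Y (f x) (f y)"
proof -
  have xy: "x \<in> topspace X" "y \<in> topspace X" using assms(2) by (auto simp: spec_le_def)
  have "f y \<in> V" if "openin Y V" "f x \<in> V" for V
  proof -
    have "openin X {z \<in> topspace X. f z \<in> V}"
      using assms(1) that(1) by (simp add: continuous_map_def)
    then show ?thesis using assms(2) xy that(2) by (auto simp: spec_le_def)
  qed
  then show ?thesis using xy assms(1) by (auto simp: spec_le_def continuous_map_def)
qed

lemma ultra_exists:
  fixes F :: "'a filter"
  assumes "F \<noteq> bot"
  shows "\<exists>U. U \<le> F \<and> U \<noteq> bot \<and> (\<forall>P. eventually P U \<or> eventually (\<lambda>x. \<not> P x) U)"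
proof -
  define R where "R = {(G, H). H \<noteq> bot \<and> H \<le> G \<and> G \<le> (F::'a filter)}"
  have FR: "Field R = {G. G \<noteq> bot \<and> G \<le> F}"
    using assms by (auto simp: R_def Field_def bot_unique)
  have po: "Partial_order R"
    unfolding partial_order_on_def preorder_on_def refl_on_def trans_def antisym_def FR
    by (auto simp: R_def bot_unique)
  have "\<exists>m\<in>Field R. \<forall>a\<in>Field R. (m, a) \<in> R \<longrightarrow> a = m"
  proof (rule Zorns_po_lemma[OF po])
    fix C assume C: "C \<in> Chains R"
    show "\<exists>u\<in>Field R. \<forall>a\<in>C. (a, u) \<in> R"
    proof (cases "C = {}")
      case True
      then show ?thesis using assms FR by auto
    next
      case False
      have CR: "a \<in> C \<Longrightarrow> a \<noteq> bot \<and> a \<le> F" for a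
        using C by (auto simp: Chains_def R_def)
      have ev: "eventually P (Inf C) \<longleftrightarrow> (\<exists>b\<in>C. eventually P b)" for P
      proof (rule eventually_Inf_base[OF False])
        fix a b assume "a \<in> C" "b \<in> C"
        then have "(a, b) \<in> R \<or> (b, a) \<in> R" using C by (auto simp: Chains_def)
        then show "\<exists>x\<in>C. x \<le> inf a b"
          using \<open>a \<in> C\<close> \<open>b \<in> C\<close> by (auto simp: R_def inf_absorb1 inf_absorb2)
      qed
      have nb: "Inf C \<noteq> bot"
        using ev[of "\<lambda>x. False"] CR by (auto simp: trivial_limit_def)
      obtain c where "c \<in> C" using False by auto
      have le: "Inf C \<le> F" using CR[OF \<open>c \<in> C\<close>] \<open>c \<in> C\<close> by (meson Inf_lower order_trans)
      have "\<forall>a\<in>C. (a, Inf C) \<in> R"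
        using nb CR by (simp add: R_def Inf_lower)
      moreover have "Inf C \<in> Field R" unfolding FR using nb le by simp
      ultimately show ?thesis by blast
    qed
  qed
  then obtain m where m: "m \<noteq> bot" "m \<le> F" and mx: "\<And>a. a \<noteq> bot \<Longrightarrow> a \<le> m \<Longrightarrow> a = m"
    unfolding FR by (auto simp: R_def)
  have "eventually P m \<or> eventually (\<lambda>x. \<not> P x) m" for P
  proof (rule disjCI)
    assume "\<not> eventually (\<lambda>x. \<not> P x) m"
    then have "inf m (principal {x. P x}) \<noteq> bot"
      by (simp add: trivial_limit_def eventually_inf_principal)
    then have "inf m (principal {x. P x}) = m" using mx by simp
    moreover have "eventually P (inf m (principal {x. P x}))"
      by (simp add: eventually_inf_principal)
    ultimately show "eventually P m" by simp
  qed
  then show ?thesis using m(1,2) by (intro exI[of _ m]) simp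
qed

lemma lims_principal:
  assumes "x \<in> topspace X"
  shows "lims X (principal {x}) = down X x"
  using assms unfolding lims_def limitin_def down_def spec_le_def eventually_principal by auto

lemma ultrafilter_principal:
  assumes "x \<in> S" shows "ultrafilter_on S (principal {x})"
  using assms unfolding ultrafilter_on_def eventually_principal principal_eq_bot_iff by auto

lemma lss_T0:
  assumes "locally_strongly_sober X" "spec_le X x y" "spec_le X y x"
  shows "x = y"
proof -
  have xy: "x \<in> topspace X" "y \<in> topspace X" using assms by (auto simp: spec_le_def)
  have dd: "down X x = down X y"
    using assms(2,3) by (auto simp: down_def intro: spec_le_trans)
  have "lims X (principal {x}) \<noteq> {}"
    using lims_principal[OF xy(1)] xy(1) by (auto simp: down_def spec_le_def)
  then have "\<exists>!w. w \<in> topspace X \<and> lims X (principal {x}) = down X w"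
    using assms(1) ultrafilter_principal[OF xy(1)] by (auto simp: locally_strongly_sober_def)
  then show ?thesis using lims_principal[OF xy(1)] dd xy by auto
qed

lemma ss_lss: "strongly_sober X \<Longrightarrow> locally_strongly_sober X"
  by (auto simp: strongly_sober_def locally_strongly_sober_def)

lemma filtered_inf:
  assumes lss: "locally_strongly_sober X" and S: "S \<subseteq> topspace X" "S \<noteq> {}"
    and filt: "\<forall>s\<in>S. \<forall>t\<in>S. \<exists>r\<in>S. spec_le X r s \<and> spec_le X r t"
    and lb: "(\<exists>y. y \<in> topspace X \<and> (\<forall>s\<in>S. spec_le X y s)) \<or> strongly_sober X"
  shows "\<exists>w\<in>topspace X. \<forall>y. spec_le X y w \<longleftrightarrow> (y \<in> topspace X \<and> (\<forall>s\<in>S. spec_le X y s))"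
proof -
  define F where "F = (INF s\<in>S. principal {t\<in>S. spec_le X t s})"
  have evF: "eventually P F \<longleftrightarrow> (\<exists>s\<in>S. eventually P (principal {t\<in>S. spec_le X t s}))" for P
    unfolding F_def
  proof (rule eventually_INF_base[OF S(2)])
    fix a b assume "a \<in> S" "b \<in> S"
    then obtain r where "r \<in> S" "spec_le X r a" "spec_le X r b" using filt by blast
    then show "\<exists>x\<in>S. principal {t \<in> S. spec_le X t x}
             \<le> inf (principal {t \<in> S. spec_le X t a}) (principal {t \<in> S. spec_le X t b})"
    proof (intro bexI[of _ r])
      have "{t \<in> S. spec_le X t r} \<subseteq> {t \<in> S. spec_le X t a} \<inter> {t \<in> S. spec_le X t b}"
      proof
        fix t assume "t \<in> {t \<in> S. spec_le X t r}"
        then have "t \<in> S" "spec_le X t r" by auto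
        then show "t \<in> {t \<in> S. spec_le X t a} \<inter> {t \<in> S. spec_le X t b}"
          using spec_le_trans[OF _ \<open>spec_le X r a\<close>] spec_le_trans[OF _ \<open>spec_le X r b\<close>] by blast
      qed
      then show "principal {t \<in> S. spec_le X t r}
             \<le> inf (principal {t \<in> S. spec_le X t a}) (principal {t \<in> S. spec_le X t b})"
        by (simp only: inf_principal principal_le_iff)
    qed simp
  qed
  have nF: "\<not> eventually (\<lambda>x. False) F"
  proof
    assume "eventually (\<lambda>x. False) F"
    then have "\<exists>s\<in>S. eventually (\<lambda>x. False) (principal {t\<in>S. spec_le X t s})"
      using evF[of "\<lambda>x. False"] by (rule iffD1[rotated])
    then obtain s where s: "s \<in> S" "eventually (\<lambda>x. False) (principal {t\<in>S. spec_le X t s})"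
      by (rule bexE)
    have "spec_le X s s" by (rule spec_le_refl[OF subsetD[OF S(1) s(1)]])
    then have "s \<in> {t\<in>S. spec_le X t s}" using s(1) by simp
    then show False using s(2) unfolding eventually_principal by auto
  qed
  have Fnb: "F \<noteq> bot" using nF eventually_False by metis
  have FS: "eventually (\<lambda>x. x \<in> S) F"
  proof -
    obtain s where "s \<in> S" using S(2) by blast
    moreover have "eventually (\<lambda>x. x \<in> S) (principal {t\<in>S. spec_le X t s})"
      unfolding eventually_principal by blast
    ultimately have "\<exists>s\<in>S. eventually (\<lambda>x. x \<in> S) (principal {t\<in>S. spec_le X t s})" by (rule bexI[rotated])
    then show ?thesis using evF[of "\<lambda>x. x \<in> S"] by (rule iffD2[rotated])
  qed
  have Fs: "s \<in> S \<Longrightarrow> eventually (\<lambda>x. spec_le X x s) F" for s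
  proof -
    assume "s \<in> S"
    moreover have "eventually (\<lambda>x. spec_le X x s) (principal {t\<in>S. spec_le X t s})"
      unfolding eventually_principal by blast
    ultimately have "\<exists>s'\<in>S. eventually (\<lambda>x. spec_le X x s) (principal {t\<in>S. spec_le X t s'})" by (rule bexI[rotated])
    then show ?thesis using evF[of "\<lambda>x. spec_le X x s"] by (rule iffD2[rotated])
  qed
  obtain U where U: "U \<le> F" "U \<noteq> bot" "\<forall>P. eventually P U \<or> eventually (\<lambda>x. \<not> P x) U"
    using ultra_exists[OF Fnb] by blast
  have US: "eventually (\<lambda>x. x \<in> S) U" using U(1) FS by (rule filter_leD)
  have Us: "s \<in> S \<Longrightarrow> eventually (\<lambda>x. spec_le X x s) U" for s using U(1) Fs by (rule filter_leD)
  have uo: "ultrafilter_on (topspace X) U"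
    unfolding ultrafilter_on_def using U(2,3) eventually_mono[OF US, of "\<lambda>x. x \<in> topspace X"] S(1) by blast
  have limsU: "lims X U = {y. y \<in> topspace X \<and> (\<forall>s\<in>S. spec_le X y s)}"
  proof (intro set_eqI iffI)
    fix y assume "y \<in> lims X U"
    then have y: "y \<in> topspace X" "\<And>V. openin X V \<Longrightarrow> y \<in> V \<Longrightarrow> eventually (\<lambda>x. x \<in> V) U"
      unfolding lims_def limitin_def by simp_all
    have "spec_le X y s" if "s \<in> S" for s
    proof -
      have "s \<in> V" if "openin X V" "y \<in> V" for V
      proof -
        have "eventually (\<lambda>x. x \<in> V \<and> spec_le X x s) U"
          using y(2)[OF that] Us[OF \<open>s \<in> S\<close>] by (rule eventually_conj)
        from eventually_happens'[OF U(2) this] obtain x where x: "x \<in> V" "spec_le X x s" by blast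
        show ?thesis by (rule spec_le_open[OF x(2) that(1) x(1)])
      qed
      moreover have "s \<in> topspace X" using that S(1) by blast
      ultimately show ?thesis using y(1) unfolding spec_le_def by blast
    qed
    then show "y \<in> {y. y \<in> topspace X \<and> (\<forall>s\<in>S. spec_le X y s)}" using y(1) by blast
  next
    fix y assume y: "y \<in> {y. y \<in> topspace X \<and> (\<forall>s\<in>S. spec_le X y s)}"
    have "eventually (\<lambda>x. x \<in> V) U" if "openin X V" "y \<in> V" for V
    proof (rule eventually_mono[OF US])
      fix x assume "x \<in> S"
      then have "spec_le X y x" using y by blast
      then show "x \<in> V" by (rule spec_le_open[OF _ that])
    qed
    then show "y \<in> lims X U" using y unfolding lims_def limitin_def by simp
  qed
  have "\<exists>w. w \<in> topspace X \<and> lims X U = down X w"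
  proof (cases "strongly_sober X")
    case True
    then have "\<exists>!x. x \<in> topspace X \<and> lims X U = down X x"
      using uo unfolding strongly_sober_def by blast
    then show ?thesis by (elim ex1E) blast
  next
    case False
    then obtain y0 where "y0 \<in> topspace X" "\<forall>s\<in>S. spec_le X y0 s" using lb by blast
    then have "y0 \<in> lims X U" using limsU by blast
    then have "lims X U \<noteq> {}" by blast
    then have "\<exists>!x. x \<in> topspace X \<and> lims X U = down X x"
      using uo lss unfolding locally_strongly_sober_def by blast
    then show ?thesis by (elim ex1E) blast
  qed
  then obtain w where w: "w \<in> topspace X" "lims X U = down X w" by blast
  have "spec_le X y w \<longleftrightarrow> (y \<in> topspace X \<and> (\<forall>s\<in>S. spec_le X y s))" for y
  proof -
    have "spec_le X y w \<longleftrightarrow> y \<in> down X w" by (simp add: down_def)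
    also have "\<dots> \<longleftrightarrow> y \<in> lims X U" using w(2) by simp
    also have "\<dots> \<longleftrightarrow> (y \<in> topspace X \<and> (\<forall>s\<in>S. spec_le X y s))" using limsU by simp
    finally show ?thesis .
  qed
  then show ?thesis using w(1) by blast
qed



context
  fixes I :: "'i set" and le :: "'i \<Rightarrow> 'i \<Rightarrow> bool"
    and X :: "'i \<Rightarrow> 'a topology" and p :: "'i \<Rightarrow> 'i \<Rightarrow> 'a \<Rightarrow> 'a"
    and L :: "'b topology" and q :: "'i \<Rightarrow> 'b \<Rightarrow> 'a"
  assumes PS: "projective_system I le X p"
    and PL: "projective_limit I le X p L q"
begin

lemma PS_ne: "I \<noteq> {}" using PS by (simp add: projective_system_def)
lemma PS_refl: "i \<in> I \<Longrightarrow> le i i" using PS by (simp add: projective_system_def)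
lemma PS_trans: "i \<in> I \<Longrightarrow> j \<in> I \<Longrightarrow> k \<in> I \<Longrightarrow> le i j \<Longrightarrow> le j k \<Longrightarrow> le i k"
  using PS unfolding projective_system_def by blast
lemma PS_dir: "i \<in> I \<Longrightarrow> j \<in> I \<Longrightarrow> \<exists>k\<in>I. le i k \<and> le j k"
  using PS unfolding projective_system_def by blast
lemma PS_cont: "i \<in> I \<Longrightarrow> j \<in> I \<Longrightarrow> le i j \<Longrightarrow> continuous_map (X j) (X i) (p i j)"
  using PS unfolding projective_system_def by blast
lemma PS_id: "i \<in> I \<Longrightarrow> x \<in> topspace (X i) \<Longrightarrow> p i i x = x"
  using PS unfolding projective_system_def by blast
lemma PS_comp: "i \<in> I \<Longrightarrow> j \<in> I \<Longrightarrow> k \<in> I \<Longrightarrow> le i j \<Longrightarrow> le j k \<Longrightarrow> x \<in> topspace (X k)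
   \<Longrightarrow> p i j (p j k x) = p i k x"
  using PS unfolding projective_system_def by blast

lemma PL_cont: "i \<in> I \<Longrightarrow> continuous_map L (X i) (q i)"
  using PL unfolding projective_limit_def proj_cone_def by blast
lemma PL_top: "i \<in> I \<Longrightarrow> z \<in> topspace L \<Longrightarrow> q i z \<in> topspace (X i)"
  using PL_cont[of i] unfolding continuous_map_def by blast
lemma PL_thread: "i \<in> I \<Longrightarrow> j \<in> I \<Longrightarrow> le i j \<Longrightarrow> z \<in> topspace L \<Longrightarrow> p i j (q j z) = q i z"
  using PL unfolding projective_limit_def proj_cone_def by blast
lemma PL_univ: "proj_cone I le X p (Z::'b topology) f \<Longrightarrow>
    (\<exists>u. continuous_map Z L u \<and> (\<forall>i\<in>I. \<forall>z\<in>topspace Z. q i (u z) = f i z) \<and>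
             (\<forall>v. continuous_map Z L v \<and> (\<forall>i\<in>I. \<forall>z\<in>topspace Z. q i (v z) = f i z)
                  \<longrightarrow> (\<forall>z\<in>topspace Z. v z = u z)))"
  using PL unfolding projective_limit_def by blast

lemma PL_inj:
  assumes z: "z \<in> topspace L" "z' \<in> topspace L" and eq: "\<forall>i\<in>I. q i z = q i z'"
  shows "z = z'"
proof -
  define Z where "Z = subtopology L {z}"
  have tZ: "topspace Z = {z}" using z by (simp add: Z_def)
  have "proj_cone I le X p Z q"
    unfolding proj_cone_def Z_def
    using PL_cont PL_thread z by (auto intro: continuous_map_from_subtopology)
  then obtain u where u: "\<And>v. continuous_map Z L v \<and> (\<forall>i\<in>I. \<forall>z\<in>topspace Z. q i (v z) = q i z)
                  \<Longrightarrow> (\<forall>z\<in>topspace Z. v z = u z)"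
    using PL_univ by blast
  have "continuous_map Z L id" unfolding Z_def
    by (rule continuous_map_from_subtopology[OF continuous_map_id])
  then have "id z = u z" using u[of id] tZ by auto
  moreover have "continuous_map Z L (\<lambda>_. z')" using z by (simp add: continuous_map_const)
  then have "z' = u z" using u[of "\<lambda>_. z'"] tZ eq by auto
  ultimately show ?thesis by simp
qed

lemma PL_surj:
  assumes x: "\<forall>i\<in>I. x i \<in> topspace (X i)" "\<forall>i\<in>I. \<forall>j\<in>I. le i j \<longrightarrow> p i j (x j) = x i"
  shows "\<exists>z\<in>topspace L. \<forall>i\<in>I. q i z = x i"
proof -
  define Z :: "'b topology" where "Z = discrete_topology {undefined}"
  have "proj_cone I le X p Z (\<lambda>i _. x i)"
    unfolding proj_cone_def Z_def using x by (auto simp: continuous_map_const)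
  then obtain u where u: "continuous_map Z L u" "\<forall>i\<in>I. \<forall>z\<in>topspace Z. q i (u z) = x i"
    using PL_univ by blast
  have "u undefined \<in> topspace L" using u(1) unfolding Z_def continuous_map_def by auto
  then show ?thesis using u(2) unfolding Z_def by auto
qed

lemma PL_basis:
  assumes W: "openin L W" and z: "z \<in> W"
  shows "\<exists>i\<in>I. \<exists>V. openin (X i) V \<and> q i z \<in> V \<and> (\<forall>z'\<in>topspace L. q i z' \<in> V \<longrightarrow> z' \<in> W)"
proof -
  define S where "S = {{z\<in>topspace L. q i z \<in> V} | i V. i \<in> I \<and> openin (X i) V}"
  define Z where "Z = topology_generated_by S"
  have tZ: "topspace Z = topspace L"
  proof -
    obtain i where "i \<in> I" using PS_ne by blast
    then have "topspace L \<in> S" unfolding S_def using PL_top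
      by (intro CollectI exI[of _ i] exI[of _ "topspace (X i)"]) auto
    then show ?thesis unfolding Z_def S_def by auto
  qed
  have cq: "continuous_map Z (X i) (q i)" if "i \<in> I" for i
    unfolding continuous_map_def
  proof (intro conjI allI impI)
    show "q i \<in> topspace Z \<rightarrow> topspace (X i)" using tZ PL_top that by auto
    fix V assume "openin (X i) V"
    then have "{z\<in>topspace L. q i z \<in> V} \<in> S" unfolding S_def using that by blast
    then show "openin Z {x \<in> topspace Z. q i x \<in> V}" unfolding Z_def tZ[unfolded Z_def]
      by (rule topology_generated_by_Basis)
  qed
  have "proj_cone I le X p Z q"
    unfolding proj_cone_def using cq PL_thread tZ by auto
  then obtain u where u: "continuous_map Z L u" "\<forall>i\<in>I. \<forall>z\<in>topspace Z. q i (u z) = q i z"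
    using PL_univ by blast
  have uid: "u x = x" if "x \<in> topspace L" for x
  proof (rule PL_inj)
    show "u x \<in> topspace L" using u(1) that tZ unfolding continuous_map_def by auto
  qed (use that u(2) tZ in auto)
  have "openin Z {x \<in> topspace Z. u x \<in> W}" using u(1) W unfolding continuous_map_def by blast
  moreover have "{x \<in> topspace Z. u x \<in> W} = W"
    using uid tZ openin_subset[OF W] by auto
  ultimately have "generate_topology_on S W"
    unfolding Z_def by (simp add: openin_topology_generated_by_iff)
  moreover have zL: "z \<in> topspace L" using z openin_subset[OF W] by blast
  ultimately show ?thesis using z
  proof (induction arbitrary: z rule: generate_topology_on.induct)
    case Empty
    then show ?case by simp
  next
    case (Int a b)
    then obtain i V where iV: "i \<in> I" "openin (X i) V" "q i z \<in> V" "\<forall>z'\<in>topspace L. q i z' \<in> V \<longrightarrow> z' \<in> a"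
      by blast
    from Int obtain j V' where jV: "j \<in> I" "openin (X j) V'" "q j z \<in> V'" "\<forall>z'\<in>topspace L. q j z' \<in> V' \<longrightarrow> z' \<in> b"
      by blast
    obtain k where k: "k \<in> I" "le i k" "le j k" using PS_dir[OF iV(1) jV(1)] by blast
    define V'' where "V'' = {x \<in> topspace (X k). p i k x \<in> V} \<inter> {x \<in> topspace (X k). p j k x \<in> V'}"
    note zt = Int.prems(1)
    have o: "openin (X k) V''" unfolding V''_def
      using PS_cont[OF iV(1) k(1,2)] PS_cont[OF jV(1) k(1,3)] iV(2) jV(2)
      by (intro openin_Int) (auto simp: continuous_map_def)
    have qk: "q k z \<in> V''" unfolding V''_def
      using PL_thread[OF iV(1) k(1,2) zt] PL_thread[OF jV(1) k(1,3) zt] iV(3) jV(3) PL_top[OF k(1) zt] by auto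
    have sub: "\<forall>z'\<in>topspace L. q k z' \<in> V'' \<longrightarrow> z' \<in> a \<inter> b"
      unfolding V''_def using PL_thread[OF iV(1) k(1,2)] PL_thread[OF jV(1) k(1,3)] iV(4) jV(4) by auto
    show ?case by (rule bexI[OF exI[of _ V''] k(1)]) (use o qk sub in simp)
  next
    case (UN K)
    then obtain k where "k \<in> K" "z \<in> k" by blast
    then obtain i V where "i \<in> I" "openin (X i) V" "q i z \<in> V" "\<forall>z'\<in>topspace L. q i z' \<in> V \<longrightarrow> z' \<in> k"
      using UN.IH UN.prems(1) by blast
    then show ?case using \<open>k \<in> K\<close> by blast
  next
    case (Basis s)
    then obtain i V where "s = {z\<in>topspace L. q i z \<in> V}" "i \<in> I" "openin (X i) V"
      unfolding S_def by blast
    then show ?case using Basis.prems by blast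
  qed
qed


lemma PL_lims:
  assumes UL: "eventually (\<lambda>x. x \<in> topspace L) U"
  shows "z \<in> lims L U \<longleftrightarrow> z \<in> topspace L \<and> (\<forall>i\<in>I. q i z \<in> lims (X i) (filtermap (q i) U))"
proof
  assume z: "z \<in> lims L U"
  then have zL: "z \<in> topspace L" and ev: "\<And>W. openin L W \<Longrightarrow> z \<in> W \<Longrightarrow> eventually (\<lambda>x. x \<in> W) U"
    unfolding lims_def limitin_def by simp_all
  have "q i z \<in> lims (X i) (filtermap (q i) U)" if i: "i \<in> I" for i
  proof -
    have "eventually (\<lambda>x. q i x \<in> V) U" if V: "openin (X i) V" "q i z \<in> V" for V
    proof -
      have o: "openin L {x \<in> topspace L. q i x \<in> V}" using PL_cont[OF i] V(1) unfolding continuous_map_def by blast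
      have "z \<in> {x \<in> topspace L. q i x \<in> V}" using zL V(2) by simp
      then have "eventually (\<lambda>x. x \<in> {x \<in> topspace L. q i x \<in> V}) U" by (rule ev[OF o])
      then show ?thesis by (rule eventually_mono) simp
    qed
    then show ?thesis using PL_top[OF i zL] unfolding lims_def limitin_def by (simp add: eventually_filtermap)
  qed
  then show "z \<in> topspace L \<and> (\<forall>i\<in>I. q i z \<in> lims (X i) (filtermap (q i) U))" using zL by simp
next
  assume z: "z \<in> topspace L \<and> (\<forall>i\<in>I. q i z \<in> lims (X i) (filtermap (q i) U))"
  have "eventually (\<lambda>x. x \<in> W) U" if W: "openin L W" "z \<in> W" for W
  proof -
    obtain i V where iV: "i \<in> I" "openin (X i) V" "q i z \<in> V" "\<forall>z'\<in>topspace L. q i z' \<in> V \<longrightarrow> z' \<in> W"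
      using PL_basis[OF W] by blast
    have "q i z \<in> lims (X i) (filtermap (q i) U)" using z iV(1) by blast
    then have "eventually (\<lambda>x. q i x \<in> V) U"
      using iV(2,3) unfolding lims_def limitin_def by (simp add: eventually_filtermap)
    then have "eventually (\<lambda>x. q i x \<in> V \<and> x \<in> topspace L) U" using UL by (rule eventually_conj)
    then show ?thesis by (rule eventually_mono) (use iV(4) in blast)
  qed
  then show "z \<in> lims L U" using z unfolding lims_def limitin_def by simp
qed

lemma PL_spec:
  "spec_le L y z \<longleftrightarrow> y \<in> topspace L \<and> z \<in> topspace L \<and> (\<forall>i\<in>I. spec_le (X i) (q i y) (q i z))"
proof
  assume yz: "spec_le L y z"
  then show "y \<in> topspace L \<and> z \<in> topspace L \<and> (\<forall>i\<in>I. spec_le (X i) (q i y) (q i z))"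
    using spec_le_mono[OF PL_cont yz] unfolding spec_le_def by simp
next
  assume yz: "y \<in> topspace L \<and> z \<in> topspace L \<and> (\<forall>i\<in>I. spec_le (X i) (q i y) (q i z))"
  have "z \<in> W" if W: "openin L W" "y \<in> W" for W
  proof -
    obtain i V where iV: "i \<in> I" "openin (X i) V" "q i y \<in> V" "\<forall>z'\<in>topspace L. q i z' \<in> V \<longrightarrow> z' \<in> W"
      using PL_basis[OF W] by blast
    have "spec_le (X i) (q i y) (q i z)" using yz iV(1) by blast
    then have "q i z \<in> V" by (rule spec_le_open[OF _ iV(2,3)])
    then show ?thesis using iV(4) yz by blast
  qed
  then show "spec_le L y z" using yz unfolding spec_le_def by blast
qed


lemma PL_main:
  assumes lssI: "\<forall>i\<in>I. locally_strongly_sober (X i)"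
    and stI: "st \<longrightarrow> (\<forall>i\<in>I. strongly_sober (X i))"
    and Uu: "ultrafilter_on (topspace L) U" and ne: "lims L U \<noteq> {} \<or> st"
  shows "\<exists>!x. x \<in> topspace L \<and> lims L U = down L x"
proof -
  have UL: "eventually (\<lambda>x. x \<in> topspace L) U" and Unb: "U \<noteq> bot"
    and Uult: "\<And>P. eventually P U \<or> eventually (\<lambda>x. \<not> P x) U"
    using Uu unfolding ultrafilter_on_def by blast+
  define ZL where "ZL = lims L U"
  have Uiu: "ultrafilter_on (topspace (X i)) (filtermap (q i) U)" if i: "i \<in> I" for i
  proof -
    have "filtermap (q i) U \<noteq> bot" using Unb by (simp add: filtermap_bot_iff)
    moreover have "eventually (\<lambda>x. x \<in> topspace (X i)) (filtermap (q i) U)"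
      unfolding eventually_filtermap by (rule eventually_mono[OF UL]) (rule PL_top[OF i])
    moreover have "eventually P (filtermap (q i) U) \<or> eventually (\<lambda>x. \<not> P x) (filtermap (q i) U)" for P
      unfolding eventually_filtermap by (rule Uult)
    ultimately show ?thesis unfolding ultrafilter_on_def by blast
  qed
  have "\<exists>x. x \<in> topspace (X i) \<and> lims (X i) (filtermap (q i) U) = down (X i) x" if i: "i \<in> I" for i
  proof (cases st)
    case True
    then have "strongly_sober (X i)" using stI i by blast
    then have "\<exists>!x. x \<in> topspace (X i) \<and> lims (X i) (filtermap (q i) U) = down (X i) x"
      using Uiu[OF i] unfolding strongly_sober_def by blast
    then show ?thesis by (elim ex1E) blast
  next
    case False
    then obtain z0 where "z0 \<in> lims L U" using ne by blast
    then have "q i z0 \<in> lims (X i) (filtermap (q i) U)" using PL_lims[OF UL] i by blast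
    then have "lims (X i) (filtermap (q i) U) \<noteq> {}" by blast
    then have "\<exists>!x. x \<in> topspace (X i) \<and> lims (X i) (filtermap (q i) U) = down (X i) x"
      using Uiu[OF i] lssI i unfolding locally_strongly_sober_def by blast
    then show ?thesis by (elim ex1E) blast
  qed
  then obtain a where a: "\<And>i. i \<in> I \<Longrightarrow> a i \<in> topspace (X i) \<and> lims (X i) (filtermap (q i) U) = down (X i) (a i)"
    by metis
  have limsL: "z \<in> ZL \<longleftrightarrow> z \<in> topspace L \<and> (\<forall>i\<in>I. spec_le (X i) (q i z) (a i))" for z
    unfolding ZL_def PL_lims[OF UL] using a by (auto simp: down_def)
  have alax: "spec_le (X i) (p i j (a j)) (a i)" if ij: "i \<in> I" "j \<in> I" "le i j" for i j
  proof -
    have aj: "a j \<in> lims (X j) (filtermap (q j) U)" using a[OF ij(2)] spec_le_refl[of "a j" "X j"]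
      by (simp add: down_def)
    have c: "continuous_map (X j) (X i) (p i j)" by (rule PS_cont[OF ij])
    have "eventually (\<lambda>x. q i x \<in> V) U" if V: "openin (X i) V" "p i j (a j) \<in> V" for V
    proof -
      have o: "openin (X j) {x \<in> topspace (X j). p i j x \<in> V}" using c V(1) unfolding continuous_map_def by blast
      have m: "a j \<in> {x \<in> topspace (X j). p i j x \<in> V}" using a[OF ij(2)] V(2) by simp
      have "limitin (X j) id (a j) (filtermap (q j) U)" using aj unfolding lims_def by simp
      from limitinD[OF this o m] have "eventually (\<lambda>x. q j x \<in> {x \<in> topspace (X j). p i j x \<in> V}) U"
        by (simp add: eventually_filtermap)
      then have "eventually (\<lambda>x. q j x \<in> {x \<in> topspace (X j). p i j x \<in> V} \<and> x \<in> topspace L) U"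
        using UL by (rule eventually_conj)
      then show ?thesis
      proof (rule eventually_mono)
        fix x assume h: "q j x \<in> {x \<in> topspace (X j). p i j x \<in> V} \<and> x \<in> topspace L"
        then have "p i j (q j x) = q i x" using PL_thread[OF ij] by simp
        then show "q i x \<in> V" using h by simp
      qed
    qed
    moreover have "p i j (a j) \<in> topspace (X i)" using continuous_map_image_subset_topspace[OF c] a[OF ij(2)] by (simp add: image_subset_iff)
    ultimately have "p i j (a j) \<in> lims (X i) (filtermap (q i) U)"
      unfolding lims_def limitin_def by (simp add: eventually_filtermap)
    then show ?thesis using a[OF ij(1)] by (simp add: down_def)
  qed
  have lssi: "locally_strongly_sober (X i)" if "i \<in> I" for i using lssI that by blast
  have T0: "x = y" if "i \<in> I" "spec_le (X i) x y" "spec_le (X i) y x" for i x y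
    using lss_T0[OF lssi[OF that(1)] that(2,3)] .
  have lbi: "(\<exists>y. y \<in> topspace (X i) \<and> (\<forall>s\<in>S. spec_le (X i) y s)) \<or> strongly_sober (X i)"
    if i: "i \<in> I" and lbz: "\<And>z. z \<in> ZL \<Longrightarrow> \<forall>s\<in>S. spec_le (X i) (q i z) s" for i S
  proof (cases st)
    case True then show ?thesis using stI i by blast
  next
    case False
    then obtain z0 where z0: "z0 \<in> ZL" using ne unfolding ZL_def by blast
    then have "z0 \<in> topspace L" using limsL by blast
    then have "q i z0 \<in> topspace (X i)" by (rule PL_top[OF i])
    then show ?thesis using lbz[OF z0] by blast
  qed
  define D where "D = {c. (\<forall>i\<in>I. c i \<in> topspace (X i) \<and> spec_le (X i) (c i) (a i)) \<and>
      (\<forall>i. i \<notin> I \<longrightarrow> c i = undefined) \<and>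
      (\<forall>i\<in>I. \<forall>j\<in>I. le i j \<longrightarrow> spec_le (X i) (p i j (c j)) (c i)) \<and>
      (\<forall>z\<in>ZL. \<forall>i\<in>I. spec_le (X i) (q i z) (c i))}"
  define R where "R = {(c, c'). c \<in> D \<and> c' \<in> D \<and> (\<forall>i\<in>I. spec_le (X i) (c' i) (c i))}"
  have Rrefl: "(c, c) \<in> R" if c: "c \<in> D" for c
  proof -
    have "\<forall>i\<in>I. spec_le (X i) (c i) (c i)"
    proof
      fix i assume "i \<in> I"
      then have "c i \<in> topspace (X i)" using c unfolding D_def by blast
      then show "spec_le (X i) (c i) (c i)" by (rule spec_le_refl)
    qed
    then show ?thesis using c unfolding R_def by simp
  qed
  have FR: "Field R = D"
  proof
    show "Field R \<subseteq> D"
    proof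
      fix c assume "c \<in> Field R"
      then obtain c' where "(c, c') \<in> R \<or> (c', c) \<in> R" unfolding Field_def by blast
      then show "c \<in> D" unfolding R_def by blast
    qed
    show "D \<subseteq> Field R"
    proof
      fix c assume c: "c \<in> D"
      then have "(c, c) \<in> R" by (rule Rrefl)
      then show "c \<in> Field R" unfolding Field_def by blast
    qed
  qed
  have po: "Partial_order R"
    unfolding partial_order_on_def preorder_on_def FR
  proof (intro conjI)
    show "refl_on D R" unfolding refl_on_def using Rrefl by blast
    show "R \<subseteq> D \<times> D" unfolding R_def by blast
    show "trans R"
    proof (rule transI)
      fix x y z assume xy: "(x, y) \<in> R" and yz: "(y, z) \<in> R"
      have h1: "\<forall>i\<in>I. spec_le (X i) (y i) (x i)" and h2: "\<forall>i\<in>I. spec_le (X i) (z i) (y i)"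
        using xy yz unfolding R_def by simp_all
      have "\<forall>i\<in>I. spec_le (X i) (z i) (x i)"
      proof
        fix i assume i: "i \<in> I"
        show "spec_le (X i) (z i) (x i)" by (rule spec_le_trans[OF h2[rule_format, OF i] h1[rule_format, OF i]])
      qed
      then show "(x, z) \<in> R" using xy yz unfolding R_def by simp
    qed
    show "antisym R"
    proof (rule antisymI)
      fix c c' assume h: "(c, c') \<in> R" "(c', c) \<in> R"
      show "c = c'"
      proof
        fix i show "c i = c' i"
        proof (cases "i \<in> I")
          case True
          have "spec_le (X i) (c' i) (c i)" "spec_le (X i) (c i) (c' i)" using h True unfolding R_def by simp_all
          then show ?thesis using T0[OF True] by simp
        next
          case False
          then show ?thesis using h unfolding R_def D_def by simp
        qed
      qed
    qed
  qed
  define a' where "a' = (\<lambda>i. if i \<in> I then a i else undefined)"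
  have a'D: "a' \<in> D"
    unfolding D_def
  proof (intro CollectI conjI ballI allI impI)
    fix i assume i: "i \<in> I"
    show "a' i \<in> topspace (X i)" using a[OF i] i a'_def by simp
    show "spec_le (X i) (a' i) (a i)" using spec_le_refl[of "a i" "X i"] a[OF i] i a'_def by simp
  next
    fix i assume "i \<notin> I" then show "a' i = undefined" using a'_def by simp
  next
    fix i j assume ij: "i \<in> I" "j \<in> I" "le i j"
    show "spec_le (X i) (p i j (a' j)) (a' i)" using alax[OF ij] ij a'_def by simp
  next
    fix z i assume "z \<in> ZL" "i \<in> I"
    then show "spec_le (X i) (q i z) (a' i)" using limsL a'_def by simp
  qed
  have "\<exists>m\<in>Field R. \<forall>c\<in>Field R. (m, c) \<in> R \<longrightarrow> c = m"
  proof (rule Zorns_po_lemma[OF po])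
    fix C assume C: "C \<in> Chains R"
    have CD: "C \<subseteq> D" using C unfolding Chains_def R_def by blast
    show "\<exists>u\<in>Field R. \<forall>c\<in>C. (c, u) \<in> R"
    proof (cases "C = {}")
      case True
      then show ?thesis using a'D FR by blast
    next
      case False
      have "\<exists>w\<in>topspace (X i). \<forall>y. spec_le (X i) y w \<longleftrightarrow> (y \<in> topspace (X i) \<and> (\<forall>s\<in>(\<lambda>c. c i) ` C. spec_le (X i) y s))"
        if i: "i \<in> I" for i
      proof (rule filtered_inf[OF lssi[OF i]])
        show "(\<lambda>c. c i) ` C \<subseteq> topspace (X i)" using CD i unfolding D_def by blast
        show "(\<lambda>c. c i) ` C \<noteq> {}" using False by blast
        show "\<forall>s\<in>(\<lambda>c. c i) ` C. \<forall>t\<in>(\<lambda>c. c i) ` C. \<exists>r\<in>(\<lambda>c. c i) ` C. spec_le (X i) r s \<and> spec_le (X i) r t"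
        proof (intro ballI)
          fix s t assume "s \<in> (\<lambda>c. c i) ` C" "t \<in> (\<lambda>c. c i) ` C"
          then obtain c c' where cc: "c \<in> C" "c' \<in> C" "s = c i" "t = c' i" by blast
          then have "(c, c') \<in> R \<or> (c', c) \<in> R" using C unfolding Chains_def by blast
          moreover have "spec_le (X i) (c i) (c i)"
            using Rrefl[of c] cc(1) CD i unfolding R_def by blast
          moreover have "spec_le (X i) (c' i) (c' i)"
            using Rrefl[of c'] cc(2) CD i unfolding R_def by blast
          ultimately show "\<exists>r\<in>(\<lambda>c. c i) ` C. spec_le (X i) r s \<and> spec_le (X i) r t"
            using cc i unfolding R_def by blast
        qed
        show "(\<exists>y. y \<in> topspace (X i) \<and> (\<forall>s\<in>(\<lambda>c. c i) ` C. spec_le (X i) y s)) \<or> strongly_sober (X i)"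
          by (rule lbi[OF i]) (use CD i in \<open>auto simp: D_def\<close>)
      qed
      then obtain w where w: "\<And>i. i \<in> I \<Longrightarrow> w i \<in> topspace (X i) \<and> (\<forall>y. spec_le (X i) y (w i) \<longleftrightarrow> (y \<in> topspace (X i) \<and> (\<forall>c\<in>C. spec_le (X i) y (c i))))"
        by (simp add: bchoice) metis
      define u where "u = (\<lambda>i. if i \<in> I then w i else undefined)"
      have wle: "spec_le (X i) (w i) (c i)" if "i \<in> I" "c \<in> C" for i c
      proof -
        have wt: "w i \<in> topspace (X i)" using w[OF that(1)] by blast
        have "spec_le (X i) (w i) (w i)" by (rule spec_le_refl[OF wt])
        then have "\<forall>c\<in>C. spec_le (X i) (w i) (c i)" using w[OF that(1)] by blast
        then show ?thesis using that(2) by blast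
      qed
      obtain c0 where c0: "c0 \<in> C" using False by blast
      have uD: "u \<in> D"
        unfolding D_def
      proof (intro CollectI conjI ballI allI impI)
        fix i assume i: "i \<in> I"
        show "u i \<in> topspace (X i)" using w[OF i] i u_def by simp
        have "c0 \<in> D" using c0 CD by blast
        then have "spec_le (X i) (c0 i) (a i)" using i unfolding D_def by blast
        then show "spec_le (X i) (u i) (a i)" using spec_le_trans[OF wle[OF i c0]] i u_def by simp
      next
        fix i assume "i \<notin> I" then show "u i = undefined" using u_def by simp
      next
        fix i j assume ij: "i \<in> I" "j \<in> I" "le i j"
        have c: "continuous_map (X j) (X i) (p i j)" by (rule PS_cont[OF ij])
        have "spec_le (X i) (p i j (w j)) (c i)" if cC: "c \<in> C" for c
        proof -
          have "spec_le (X i) (p i j (w j)) (p i j (c j))" by (rule spec_le_mono[OF c wle[OF ij(2) cC]])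
          moreover have "spec_le (X i) (p i j (c j)) (c i)" using cC CD ij unfolding D_def by blast
          ultimately show ?thesis by (rule spec_le_trans)
        qed
        moreover have "p i j (w j) \<in> topspace (X i)"
          using continuous_map_image_subset_topspace[OF c] w[OF ij(2)] by (simp add: image_subset_iff)
        ultimately have "spec_le (X i) (p i j (w j)) (w i)" using w[OF ij(1)] by blast
        then show "spec_le (X i) (p i j (u j)) (u i)" using ij u_def by simp
      next
        fix z i assume zi: "z \<in> ZL" "i \<in> I"
        have "spec_le (X i) (q i z) (c i)" if "c \<in> C" for c using that CD zi unfolding D_def by blast
        moreover have "q i z \<in> topspace (X i)" using zi limsL PL_top by blast
        ultimately have "spec_le (X i) (q i z) (w i)" using w[OF zi(2)] by blast
        then show "spec_le (X i) (q i z) (u i)" using zi u_def by simp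
      qed
      have "\<forall>c\<in>C. (c, u) \<in> R"
      proof
        fix c assume cC: "c \<in> C"
        have "\<forall>i\<in>I. spec_le (X i) (u i) (c i)" using wle cC u_def by simp
        then show "(c, u) \<in> R" using cC CD uD unfolding R_def by blast
      qed
      then show ?thesis using uD FR by blast
    qed
  qed
  then obtain m where mD: "m \<in> D" and mmin: "\<And>c. c \<in> D \<Longrightarrow> (m, c) \<in> R \<Longrightarrow> c = m"
    unfolding FR by blast
  have mt: "m i \<in> topspace (X i)" and ma: "spec_le (X i) (m i) (a i)" if "i \<in> I" for i
    using mD that unfolding D_def by blast+
  have mlax: "spec_le (X i) (p i j (m j)) (m i)" if "i \<in> I" "j \<in> I" "le i j" for i j
    using mD that unfolding D_def by blast
  have mz: "spec_le (X i) (q i z) (m i)" if "z \<in> ZL" "i \<in> I" for z i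
    using mD that unfolding D_def by blast
  have mout: "m i = undefined" if "i \<notin> I" for i
    using mD that unfolding D_def by blast
  have hS: "spec_le (X i) (p i k' (m k')) (p i k (m k))"
    if h: "i \<in> I" "k \<in> I" "k' \<in> I" "le i k" "le k k'" for i k k'
  proof -
    have "spec_le (X i) (p i k (p k k' (m k'))) (p i k (m k))"
      by (rule spec_le_mono[OF PS_cont[OF h(1,2,4)] mlax[OF h(2,3,5)]])
    moreover have "p i k (p k k' (m k')) = p i k' (m k')"
      by (rule PS_comp[OF h(1,2,3,4,5) mt[OF h(3)]])
    ultimately show ?thesis by simp
  qed
  have "\<exists>w\<in>topspace (X i). \<forall>y. spec_le (X i) y w \<longleftrightarrow>
          (y \<in> topspace (X i) \<and> (\<forall>s\<in>(\<lambda>k. p i k (m k)) ` {k\<in>I. le i k}. spec_le (X i) y s))"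
    if i: "i \<in> I" for i
  proof (rule filtered_inf[OF lssi[OF i]])
    show "(\<lambda>k. p i k (m k)) ` {k\<in>I. le i k} \<subseteq> topspace (X i)"
    proof
      fix x assume "x \<in> (\<lambda>k. p i k (m k)) ` {k\<in>I. le i k}"
      then obtain k where k: "k \<in> I" "le i k" "x = p i k (m k)" by blast
      show "x \<in> topspace (X i)"
        using continuous_map_image_subset_topspace[OF PS_cont[OF i k(1,2)]] mt[OF k(1)] k(3)
        by (simp add: image_subset_iff)
    qed
    show "(\<lambda>k. p i k (m k)) ` {k\<in>I. le i k} \<noteq> {}" using i PS_refl[OF i] by blast
    show "\<forall>s\<in>(\<lambda>k. p i k (m k)) ` {k\<in>I. le i k}. \<forall>t\<in>(\<lambda>k. p i k (m k)) ` {k\<in>I. le i k}.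
            \<exists>r\<in>(\<lambda>k. p i k (m k)) ` {k\<in>I. le i k}. spec_le (X i) r s \<and> spec_le (X i) r t"
    proof (intro ballI)
      fix s t assume "s \<in> (\<lambda>k. p i k (m k)) ` {k\<in>I. le i k}" "t \<in> (\<lambda>k. p i k (m k)) ` {k\<in>I. le i k}"
      then obtain k1 k2 where k: "k1 \<in> I" "le i k1" "s = p i k1 (m k1)" "k2 \<in> I" "le i k2" "t = p i k2 (m k2)"
        by blast
      obtain k3 where k3: "k3 \<in> I" "le k1 k3" "le k2 k3" using PS_dir[OF k(1,4)] by blast
      have ik3: "le i k3" by (rule PS_trans[OF i k(1) k3(1) k(2) k3(2)])
      have "spec_le (X i) (p i k3 (m k3)) s" using hS[OF i k(1) k3(1) k(2) k3(2)] k(3) by simp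
      moreover have "spec_le (X i) (p i k3 (m k3)) t" using hS[OF i k(4) k3(1) k(5) k3(3)] k(6) by simp
      moreover have "p i k3 (m k3) \<in> (\<lambda>k. p i k (m k)) ` {k\<in>I. le i k}" using k3(1) ik3 by blast
      ultimately show "\<exists>r\<in>(\<lambda>k. p i k (m k)) ` {k\<in>I. le i k}. spec_le (X i) r s \<and> spec_le (X i) r t"
        by blast
    qed
    show "(\<exists>y. y \<in> topspace (X i) \<and> (\<forall>s\<in>(\<lambda>k. p i k (m k)) ` {k\<in>I. le i k}. spec_le (X i) y s))
          \<or> strongly_sober (X i)"
    proof (rule lbi[OF i])
      fix z assume z: "z \<in> ZL"
      then have zL: "z \<in> topspace L" using limsL by blast
      show "\<forall>s\<in>(\<lambda>k. p i k (m k)) ` {k\<in>I. le i k}. spec_le (X i) (q i z) s"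
      proof
        fix s assume "s \<in> (\<lambda>k. p i k (m k)) ` {k\<in>I. le i k}"
        then obtain k where k: "k \<in> I" "le i k" "s = p i k (m k)" by blast
        have "spec_le (X i) (p i k (q k z)) (p i k (m k))"
          by (rule spec_le_mono[OF PS_cont[OF i k(1,2)] mz[OF z k(1)]])
        then show "spec_le (X i) (q i z) s" using PL_thread[OF i k(1,2) zL] k(3) by simp
      qed
    qed
  qed
  then obtain w where w: "\<And>i. i \<in> I \<Longrightarrow> w i \<in> topspace (X i) \<and> (\<forall>y. spec_le (X i) y (w i) \<longleftrightarrow>
          (y \<in> topspace (X i) \<and> (\<forall>k\<in>I. le i k \<longrightarrow> spec_le (X i) y (p i k (m k)))))"
    by (simp add: bchoice) metis
  have wt: "w i \<in> topspace (X i)" if "i \<in> I" for i using w[OF that] by blast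
  have wle: "spec_le (X i) (w i) (p i k (m k))" if "i \<in> I" "k \<in> I" "le i k" for i k
  proof -
    have "spec_le (X i) (w i) (w i)" by (rule spec_le_refl[OF wt[OF that(1)]])
    then have "\<forall>k\<in>I. le i k \<longrightarrow> spec_le (X i) (w i) (p i k (m k))" using w[OF that(1)] by blast
    then show ?thesis using that(2,3) by blast
  qed
  have wm: "spec_le (X i) (w i) (m i)" if i: "i \<in> I" for i
    using wle[OF i i PS_refl[OF i]] PS_id[OF i mt[OF i]] by simp
  define m' where "m' = (\<lambda>i. if i \<in> I then w i else undefined)"
  have m'D: "m' \<in> D"
    unfolding D_def
  proof (intro CollectI conjI ballI allI impI)
    fix i assume i: "i \<in> I"
    show "m' i \<in> topspace (X i)" using wt[OF i] i m'_def by simp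
    show "spec_le (X i) (m' i) (a i)" using spec_le_trans[OF wm[OF i] ma[OF i]] i m'_def by simp
  next
    fix i assume "i \<notin> I" then show "m' i = undefined" using m'_def by simp
  next
    fix i j assume ij: "i \<in> I" "j \<in> I" "le i j"
    have c: "continuous_map (X j) (X i) (p i j)" by (rule PS_cont[OF ij])
    have pt: "p i j (w j) \<in> topspace (X i)"
      using continuous_map_image_subset_topspace[OF c] wt[OF ij(2)] by (simp add: image_subset_iff)
    have "\<forall>k\<in>I. le i k \<longrightarrow> spec_le (X i) (p i j (w j)) (p i k (m k))"
    proof (intro ballI impI)
      fix k assume k: "k \<in> I" "le i k"
      obtain k' where k': "k' \<in> I" "le j k'" "le k k'" using PS_dir[OF ij(2) k(1)] by blast
      have jk': "le i k'" by (rule PS_trans[OF ij(1) k(1) k'(1) k(2) k'(3)])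
      have "spec_le (X i) (p i j (w j)) (p i j (p j k' (m k')))"
        by (rule spec_le_mono[OF c wle[OF ij(2) k'(1,2)]])
      moreover have "p i j (p j k' (m k')) = p i k' (m k')"
        by (rule PS_comp[OF ij(1,2) k'(1) ij(3) k'(2) mt[OF k'(1)]])
      ultimately have "spec_le (X i) (p i j (w j)) (p i k' (m k'))" by simp
      then show "spec_le (X i) (p i j (w j)) (p i k (m k))"
        by (rule spec_le_trans[OF _ hS[OF ij(1) k(1) k'(1) k(2) k'(3)]])
    qed
    then have "spec_le (X i) (p i j (w j)) (w i)" using w[OF ij(1)] pt by blast
    then show "spec_le (X i) (p i j (m' j)) (m' i)" using ij m'_def by simp
  next
    fix z i assume zi: "z \<in> ZL" "i \<in> I"
    have zL: "z \<in> topspace L" using zi(1) limsL by blast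
    have "\<forall>k\<in>I. le i k \<longrightarrow> spec_le (X i) (q i z) (p i k (m k))"
    proof (intro ballI impI)
      fix k assume k: "k \<in> I" "le i k"
      have "spec_le (X i) (p i k (q k z)) (p i k (m k))"
        by (rule spec_le_mono[OF PS_cont[OF zi(2) k(1,2)] mz[OF zi(1) k(1)]])
      then show "spec_le (X i) (q i z) (p i k (m k))" using PL_thread[OF zi(2) k(1,2) zL] by simp
    qed
    then have "spec_le (X i) (q i z) (w i)" using w[OF zi(2)] PL_top[OF zi(2) zL] by blast
    then show "spec_le (X i) (q i z) (m' i)" using zi m'_def by simp
  qed
  have "(m, m') \<in> R" unfolding R_def using mD m'D wm m'_def by simp
  then have mm': "m' = m" by (rule mmin[OF m'D])
  have thr: "p i j (m j) = m i" if ij: "i \<in> I" "j \<in> I" "le i j" for i j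
  proof -
    have "spec_le (X i) (w i) (p i j (m j))" by (rule wle[OF ij])
    then have "spec_le (X i) (m i) (p i j (m j))" using mm' m'_def ij(1) by (metis)
    then show ?thesis using T0[OF ij(1) mlax[OF ij]] by simp
  qed
  obtain b where b: "b \<in> topspace L" "\<And>i. i \<in> I \<Longrightarrow> q i b = m i"
    using PL_surj[of m] mt thr by blast
  have eq: "lims L U = down L b"
  proof (intro set_eqI iffI)
    fix z assume "z \<in> lims L U"
    then have z: "z \<in> ZL" unfolding ZL_def .
    then have "z \<in> topspace L" using limsL by blast
    moreover have "\<forall>i\<in>I. spec_le (X i) (q i z) (q i b)" using mz[OF z] b(2) by simp
    ultimately have "spec_le L z b" using PL_spec b(1) by blast
    then show "z \<in> down L b" unfolding down_def by simp
  next
    fix y assume "y \<in> down L b"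
    then have yb: "spec_le L y b" unfolding down_def by simp
    then have y: "y \<in> topspace L" "\<forall>i\<in>I. spec_le (X i) (q i y) (q i b)" using PL_spec by blast+
    have "\<forall>i\<in>I. spec_le (X i) (q i y) (a i)"
    proof
      fix i assume i: "i \<in> I"
      have "spec_le (X i) (q i y) (m i)" using y(2) i b(2) by simp
      then show "spec_le (X i) (q i y) (a i)" by (rule spec_le_trans[OF _ ma[OF i]])
    qed
    then have "y \<in> ZL" using limsL y(1) by blast
    then show "y \<in> lims L U" unfolding ZL_def .
  qed
  show ?thesis
  proof (rule ex1I[of _ b])
    show "b \<in> topspace L \<and> lims L U = down L b" using b(1) eq by simp
  next
    fix x assume x: "x \<in> topspace L \<and> lims L U = down L x"
    then have dd: "down L x = down L b" using eq by simp
    have "spec_le L x x" using x by (simp add: spec_le_refl)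
    then have "x \<in> down L x" unfolding down_def by simp
    then have "x \<in> down L b" using dd by simp
    then have xb: "spec_le L x b" unfolding down_def by simp
    have "spec_le L b b" using b(1) by (simp add: spec_le_refl)
    then have "b \<in> down L b" unfolding down_def by simp
    then have "b \<in> down L x" using dd by simp
    then have bx: "spec_le L b x" unfolding down_def by simp
    have "\<forall>i\<in>I. q i x = q i b"
    proof
      fix i assume i: "i \<in> I"
      have "spec_le (X i) (q i x) (q i b)" using PL_spec[THEN iffD1, OF xb] i by blast
      moreover have "spec_le (X i) (q i b) (q i x)" using PL_spec[THEN iffD1, OF bx] i by blast
      ultimately show "q i x = q i b" by (rule T0[OF i])
    qed
    then show "x = b" using PL_inj[OF _ b(1)] x by blast
  qed
qed
end

theorem theorem5p1:
  fixes I :: "'i set" and le :: "'i \<Rightarrow> 'i \<Rightarrow> bool"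
    and X :: "'i \<Rightarrow> 'a topology" and p :: "'i \<Rightarrow> 'i \<Rightarrow> 'a \<Rightarrow> 'a"
    and L :: "'b topology" and q :: "'i \<Rightarrow> 'b \<Rightarrow> 'a"
  assumes "projective_system I le X p"
    and "projective_limit I le X p L q"
  shows "((\<forall>i\<in>I. locally_strongly_sober (X i)) \<longrightarrow> locally_strongly_sober L) \<and>
         ((\<forall>i\<in>I. strongly_sober (X i)) \<longrightarrow> strongly_sober L)"
proof (intro conjI impI)
  assume H: "\<forall>i\<in>I. locally_strongly_sober (X i)"
  show "locally_strongly_sober L"
    unfolding locally_strongly_sober_def
  proof (intro allI impI)
    fix U assume U: "ultrafilter_on (topspace L) U \<and> lims L U \<noteq> {}"
    show "\<exists>!x. x \<in> topspace L \<and> lims L U = down L x"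
      by (rule PL_main[OF assms(1,2) H, where st=False]) (use U in auto)
  qed
next
  assume H: "\<forall>i\<in>I. strongly_sober (X i)"
  have H': "\<forall>i\<in>I. locally_strongly_sober (X i)" using H ss_lss by blast
  show "strongly_sober L"
    unfolding strongly_sober_def
  proof (intro allI impI)
    fix U assume U: "ultrafilter_on (topspace L) U"
    show "\<exists>!x. x \<in> topspace L \<and> lims L U = down L x"
      by (rule PL_main[OF assms(1,2) H', where st=True]) (use U H in auto)
  qed
qed

end
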